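(* Let $d\in\ell^\infty(\mathbb{Z})$ be a limit-periodic potential that has an infinite frequency integer set $S_d$. Let $\tilde d\in\ell^\infty(\mathbb{Z})$ be a limit-periodic potential with a frequency integer set $S_{\tilde d}$. If $S_{\tilde d}$ is an infinite subset of $S_d$, then $\Omega_d\cong\Omega_{\tilde d}$ as topological groups.
   Context: $\ell^\infty(\mathbb{Z})$ carries the sup norm; $\sigma$ is the left shift, $(\sigma d)_n=d_{n+1}$. For $d\in\ell^\infty(\mathbb{Z})$, $\mathrm{orb}(d)=\{\sigma^k d: k\in\mathbb{Z}\}$ and $\Omega_d=\mathrm{hull}(d)$ is the closure of $\mathrm{orb}(d)$ in $\ell^\infty(\mathbb{Z})$. A potential $p$ is periodic if $\mathrm{orb}(p)$ is finite; $d$ is limit-periodic if it lies in the $\ell^\infty$-closure of the set of periodic potentials. For limit-periodic $d$, $\Omega_d$ is compact and carries a unique topological group structure (which is abelian) with identity $d$ such that $k\mapsto\sigma^k(d)$ is a group homomorphism $\mathbb{Z}\to\Omega_d$; isomorphisms of hulls refer to this structure. The frequency module $F_d\subset\mathbb{R}$ is the set of $\alpha\in\mathbb{R}$ such that $\sigma^k(d)\mapsto e^{ik\alpha}$ extends to a continuous character of $\Omega_d$ (equivalently, the $\mathbb{Z}$-module generated by those $\alpha$ with $\lim_{n\to\infty}\frac1{2n}\sum_{k=-n}^n d(k)e^{-ik\alpha}\neq0$). A frequency integer set of $d$ is a set $S=\{n_j\}$ of positive integers with $n_j\mid n_{j+1}$ for all $j$ such that $F_d$ is the $\mathbb{Z}$-module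 generated by $\{2\pi/n_j: n_j\in S\}$. *)

theory Defs
  imports "HOL-Analysis.Analysis"
begin

text \<open>Potentials: elements of l-infinity(Z), modelled as bounded (automatically continuous,
  Z being discrete) functions Z -> R; the metric of this type is the sup distance.\<close>
type_synonym pot = "int \<Rightarrow>\<^sub>C real"

definition shiftk :: "int \<Rightarrow> pot \<Rightarrow> pot" where
  "shiftk k d = Bcontfun (\<lambda>n. apply_bcontfun d (n + k))"

definition orb :: "pot \<Rightarrow> pot set" where
  "orb d = range (\<lambda>k. shiftk k d)"

definition pot_hull :: "pot \<Rightarrow> pot set" where
  "pot_hull d = closure (orb d)"

definition periodic_pot :: "pot \<Rightarrow> bool" where
  "periodic_pot p \<longleftrightarrow> finite (orb p)"

definition limit_periodic :: "pot \<Rightarrow> bool" where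
  "limit_periodic d \<longleftrightarrow> d \<in> closure {p. periodic_pot p}"

definition hull_group_op :: "pot \<Rightarrow> (pot \<Rightarrow> pot \<Rightarrow> pot) \<Rightarrow> bool" where
  "hull_group_op d m \<longleftrightarrow>
     (\<forall>x\<in>pot_hull d. \<forall>y\<in>pot_hull d. m x y \<in> pot_hull d) \<and>
     (\<forall>x\<in>pot_hull d. \<forall>y\<in>pot_hull d. \<forall>z\<in>pot_hull d. m (m x y) z = m x (m y z)) \<and>
     (\<forall>x\<in>pot_hull d. m d x = x \<and> m x d = x) \<and>
     (\<exists>inv. (\<forall>x\<in>pot_hull d. inv x \<in> pot_hull d \<and> m x (inv x) = d \<and> m (inv x) x = d) \<and>
            continuous_on (pot_hull d) inv) \<and>
     continuous_on (pot_hull d \<times> pot_hull d) (\<lambda>(x, y). m x y) \<and>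
     (\<forall>k l. m (shiftk k d) (shiftk l d) = shiftk (k + l) d)"

text \<open>The (unique) group operation on the hull of a limit-periodic potential.\<close>
definition hull_mult :: "pot \<Rightarrow> pot \<Rightarrow> pot \<Rightarrow> pot" where
  "hull_mult d = (SOME m. hull_group_op d m)"

definition hulls_isomorphic :: "pot \<Rightarrow> pot \<Rightarrow> bool" where
  "hulls_isomorphic d e \<longleftrightarrow>
     (\<exists>\<phi> \<psi>. homeomorphism (pot_hull d) (pot_hull e) \<phi> \<psi> \<and>
        (\<forall>x\<in>pot_hull d. \<forall>y\<in>pot_hull d. \<phi> (hull_mult d x y) = hull_mult e (\<phi> x) (\<phi> y)))"

definition freq_module :: "pot \<Rightarrow> real set" where
  "freq_module d = {\<alpha>. \<exists>chr::pot \<Rightarrow> complex.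
      continuous_on (pot_hull d) chr \<and>
      (\<forall>x\<in>pot_hull d. norm (chr x) = 1) \<and>
      (\<forall>x\<in>pot_hull d. \<forall>y\<in>pot_hull d. chr (hull_mult d x y) = chr x * chr y) \<and>
      (\<forall>k::int. chr (shiftk k d) = cis (of_int k * \<alpha>))}"

definition int_span :: "real set \<Rightarrow> real set" where
  "int_span A = {x. \<exists>F c. finite F \<and> F \<subseteq> A \<and> x = (\<Sum>a\<in>F. of_int (c a) * a)}"

definition freq_integer_set :: "pot \<Rightarrow> nat set \<Rightarrow> bool" where
  "freq_integer_set d S \<longleftrightarrow>
     (\<exists>n :: nat \<Rightarrow> nat. S = range n \<and> (\<forall>j. 0 < n j \<and> n j dvd n (Suc j))) \<and>
     freq_module d = int_span ((\<lambda>n. 2 * pi / real n) ` S)"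

end

theory Submission
  imports Defs
begin


instantiation int :: uniformity_dist
begin
definition dist_int :: "int \<Rightarrow> int \<Rightarrow> real" where "dist_int x y = \<bar>real_of_int x - real_of_int y\<bar>"
definition uniformity_int :: "(int \<times> int) filter" where
  "uniformity_int = (INF e\<in>{0<..}. principal {(x, y). \<bar>real_of_int x - real_of_int y\<bar> < e})"
instance by standard (simp add: uniformity_int_def dist_int_def)
end

lemma int_close_eq: "\<bar>real_of_int a - real_of_int b\<bar> < 1 \<Longrightarrow> a = b"
  by linarith

instance int :: metric_space
  apply standard
  subgoal for U
    unfolding eventually_uniformity_metric dist_int_def
    by (auto simp: open_discrete intro!: exI[where x=1] dest: int_close_eq)
  subgoal for x y by (simp add: dist_int_def)
  subgoal for x y z by (simp add: dist_int_def)
  done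

lemma shift_in_bcontfun: fixes d :: pot and k :: int shows "(\<lambda>n. apply_bcontfun d (n + k)) \<in> bcontfun"
proof -
  have "range (\<lambda>n. apply_bcontfun d (n + k)) \<subseteq> range (apply_bcontfun d)" by auto
  then have "bounded (range (\<lambda>n. apply_bcontfun d (n + k)))"
    using bounded_subset bounded_apply_bcontfun by blast
  moreover have "continuous_on UNIV (\<lambda>n::int. apply_bcontfun d (n + k))"
    by (simp add: continuous_on_def at_discrete)
  ultimately show ?thesis by (simp add: bcontfun_def)
qed

lemma shiftk_apply[simp]: "apply_bcontfun (shiftk k d) n = apply_bcontfun d (n + k)"
  unfolding shiftk_def by (simp add: Bcontfun_inverse[OF shift_in_bcontfun])

lemma shiftk_shiftk[simp]: "shiftk k (shiftk l d) = shiftk (k + l) d"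
  by (rule bcontfun_eqI) (simp add: ac_simps)

lemma shiftk_0[simp]: "shiftk 0 d = d"
  by (rule bcontfun_eqI) simp

lemma dist_shiftk_le: "dist (shiftk k x) (shiftk k y) \<le> dist x y"
  by (rule dist_bound) (simp add: dist_bounded)

lemma dist_shiftk[simp]: "dist (shiftk k x) (shiftk k y) = dist x y"
proof -
  have "dist x y = dist (shiftk (-k) (shiftk k x)) (shiftk (-k) (shiftk k y))" by simp
  also have "\<dots> \<le> dist (shiftk k x) (shiftk k y)" by (rule dist_shiftk_le)
  finally show ?thesis using dist_shiftk_le[of k x y] by linarith
qed

lemma dist_orb: "dist (shiftk k d) (shiftk l d) = dist (shiftk (k - l) d) d"
proof -
  have "dist (shiftk k d) (shiftk l d) = dist (shiftk l (shiftk (k-l) d)) (shiftk l (shiftk 0 d))" by simp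
  also have "\<dots> = dist (shiftk (k - l) d) d" by (simp only: dist_shiftk) simp
  finally show ?thesis .
qed

lemma dist_orb_add: "dist (shiftk (k + l) d) d \<le> dist (shiftk k d) d + dist (shiftk l d) d"
proof -
  have "dist (shiftk (k + l) d) d \<le> dist (shiftk (k+l) d) (shiftk l d) + dist (shiftk l d) d"
    by (rule dist_triangle)
  also have "dist (shiftk (k+l) d) (shiftk l d) = dist (shiftk k d) d" by (simp add: dist_orb)
  finally show ?thesis .
qed

lemma dist_orb_neg: "dist (shiftk (- k) d) d = dist (shiftk k d) d"
proof -
  have "dist (shiftk 0 d) (shiftk k d) = dist (shiftk (0 - k) d) d" by (rule dist_orb)
  then show ?thesis by (simp add: dist_commute)
qed

lemma pot_hull_closed: "closed (pot_hull d)" by (simp add: pot_hull_def)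
lemma orb_in_hull: "shiftk k d \<in> pot_hull d"
  unfolding pot_hull_def orb_def by (rule closure_subset[THEN subsetD]) (rule rangeI)
lemma d_in_hull: "d \<in> pot_hull d" using orb_in_hull[of 0 d] by simp



lemma ext_gen:
  fixes p :: "'i \<Rightarrow> 'a::metric_space" and f :: "'i \<Rightarrow> 'b::complete_space"
  assumes uc: "\<And>e. e>0 \<Longrightarrow> \<exists>\<delta>>0. \<forall>i j. dist (p i) (p j) < \<delta> \<longrightarrow> dist (f i) (f j) < e"
  obtains g where "continuous_on (closure (range p)) g" "\<And>i. g (p i) = f i"
    "g ` closure (range p) \<subseteq> closure (range f)"
proof -
  have wd: "f i = f j" if "p i = p j" for i j
  proof -
    have lt: "dist (f i) (f j) < e" if epos: "e > 0" for e
    proof -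
      obtain \<delta> where "\<delta> > 0" and \<delta>: "\<forall>i j. dist (p i) (p j) < \<delta> \<longrightarrow> dist (f i) (f j) < e"
        using uc[OF epos] by blast
      have "dist (p i) (p j) < \<delta>" using \<open>p i = p j\<close> \<open>\<delta> > 0\<close> by simp
      then show ?thesis using \<delta> by simp
    qed
    show ?thesis
    proof (rule ccontr)
      assume "f i \<noteq> f j"
      then have "0 < dist (f i) (f j)" by simp
      from lt[OF this] show False by simp
    qed
  qed
  define F where "F x = f (SOME i. p i = x)" for x
  have F: "F (p i) = f i" for i
  proof -
    have "p (SOME j. p j = p i) = p i" by (rule someI) simp
    then show ?thesis unfolding F_def by (rule wd)
  qed
  have "uniformly_continuous_on (range p) F"
    unfolding uniformly_continuous_on_def
  proof (intro allI impI)
    fix e :: real assume "e > 0"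
    from uc[OF this] obtain \<delta> where "\<delta> > 0" and \<delta>: "\<forall>i j. dist (p i) (p j) < \<delta> \<longrightarrow> dist (f i) (f j) < e" by blast
    have "\<forall>x\<in>range p. \<forall>x'\<in>range p. dist x' x < \<delta> \<longrightarrow> dist (F x') (F x) < e"
    proof (intro ballI impI)
      fix x x' assume "x \<in> range p" "x' \<in> range p" "dist x' x < \<delta>"
      then obtain i i' where "x = p i" "x' = p i'" by (auto simp: image_iff)
      then show "dist (F x') (F x) < e" using \<delta>[rule_format, of i' i] \<open>dist x' x < \<delta>\<close> by (simp add: F)
    qed
    then show "\<exists>d>0. \<forall>x\<in>range p. \<forall>x'\<in>range p. dist x' x < d \<longrightarrow> dist (F x') (F x) < e"
      using \<open>\<delta> > 0\<close> by (intro exI[where x=\<delta>]) simp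
  qed
  then have "\<exists>g. uniformly_continuous_on (closure (range p)) g \<and> (\<forall>x\<in>range p. F x = g x)"
    by (rule uniformly_continuous_on_extension_on_closure) blast
  then obtain g where g1: "uniformly_continuous_on (closure (range p)) g" and g2: "\<And>x. x \<in> range p \<Longrightarrow> F x = g x"
    by blast
  have c: "continuous_on (closure (range p)) g" using uniformly_continuous_imp_continuous[OF g1] .
  have gp: "g (p i) = f i" for i using g2[of "p i"] F by simp
  have "g ` closure (range p) \<subseteq> closure (g ` range p)"
    by (rule continuous_image_closure_subset[OF c]) simp
  also have "g ` range p = range f" unfolding image_image gp ..
  finally have "g ` closure (range p) \<subseteq> closure (range f)" .
  then show ?thesis using that[OF c gp] by simp
qed

lemma eq_on_closure:
  fixes f g :: "'a::metric_space \<Rightarrow> 'b::metric_space"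
  assumes "continuous_on (closure S) f" "continuous_on (closure S) g" "\<And>x. x \<in> S \<Longrightarrow> f x = g x"
    "x \<in> closure S"
  shows "f x = g x"
proof -
  have c: "continuous_on (closure S) (\<lambda>x. dist (f x) (g x))" by (rule continuous_on_dist[OF assms(1,2)])
  have "dist (f x) (g x) = 0" by (rule continuous_constant_on_closure[OF c _ assms(4)]) (simp add: assms(3))
  then show ?thesis by simp
qed



lemma dist_orb_sum:
  "dist (shiftk (k + l) d) (shiftk (k' + l') d) \<le> dist (shiftk k d) (shiftk k' d) + dist (shiftk l d) (shiftk l' d)"
proof -
  have "dist (shiftk (k + l) d) (shiftk (k' + l') d) \<le> dist (shiftk (k + l) d) (shiftk (k' + l) d) + dist (shiftk (k' + l) d) (shiftk (k' + l') d)"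
    by (rule dist_triangle)
  also have "dist (shiftk (k + l) d) (shiftk (k' + l) d) = dist (shiftk k d) (shiftk k' d)"
    by (simp add: dist_orb[of "k + l"] dist_orb[of k])
  also have "dist (shiftk (k' + l) d) (shiftk (k' + l') d) = dist (shiftk l d) (shiftk l' d)"
    by (simp add: dist_orb[of "k' + l"] dist_orb[of l])
  finally show ?thesis .
qed

lemma cont2:
  fixes g :: "'a::topological_space \<times> 'b::topological_space \<Rightarrow> 'c::topological_space"
  assumes "continuous_on (H1 \<times> H2) g" "continuous_on T a" "continuous_on T b"
    "\<And>t. t \<in> T \<Longrightarrow> a t \<in> H1" "\<And>t. t \<in> T \<Longrightarrow> b t \<in> H2"
  shows "continuous_on T (\<lambda>t. g (a t, b t))"
proof (rule continuous_on_compose2[OF assms(1)])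
  show "continuous_on T (\<lambda>t. (a t, b t))" using assms(2,3) by (rule continuous_on_Pair)
  show "(\<lambda>t. (a t, b t)) ` T \<subseteq> H1 \<times> H2" using assms(4,5) by auto
qed

lemma orb_eq: "orb d = range (\<lambda>k. shiftk k d)" by (simp add: orb_def)

lemma hull_group_op_exists: "\<exists>m. hull_group_op d m"
proof -
  define H where "H = pot_hull d"
  have Hcl: "H = closure (range (\<lambda>k. shiftk k d))" by (simp add: H_def pot_hull_def orb_def)
  have dH: "d \<in> H" using d_in_hull H_def by simp
  have sH: "shiftk k d \<in> H" for k using orb_in_hull H_def by simp
  define p2 where "p2 = (\<lambda>(k::int, l::int). (shiftk k d, shiftk l d))"
  define f2 where "f2 = (\<lambda>(k::int, l::int). shiftk (k + l) d)"
  have uc2: "\<exists>\<delta>>0. \<forall>i j. dist (p2 i) (p2 j) < \<delta> \<longrightarrow> dist (f2 i) (f2 j) < e" if epos: "e > 0" for e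
  proof (intro exI conjI allI impI)
    show "e / 2 > 0" using epos by simp
    fix i j assume a: "dist (p2 i) (p2 j) < e / 2"
    obtain k l where i: "i = (k, l)" by (cases i)
    obtain k' l' where j: "j = (k', l')" by (cases j)
    have "dist (shiftk k d) (shiftk k' d) \<le> dist (p2 i) (p2 j)"
      using dist_fst_le[of "p2 i" "p2 j"] by (simp add: i j p2_def)
    moreover have "dist (shiftk l d) (shiftk l' d) \<le> dist (p2 i) (p2 j)"
      using dist_snd_le[of "p2 i" "p2 j"] by (simp add: i j p2_def)
    moreover have "dist (f2 i) (f2 j) \<le> dist (shiftk k d) (shiftk k' d) + dist (shiftk l d) (shiftk l' d)"
      by (simp add: i j f2_def dist_orb_sum)
    ultimately show "dist (f2 i) (f2 j) < e" using a by linarith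
  qed
  obtain g2 where g2c: "continuous_on (closure (range p2)) g2" and g2p: "\<And>i. g2 (p2 i) = f2 i"
    and g2i: "g2 ` closure (range p2) \<subseteq> closure (range f2)"
    by (rule ext_gen[of p2 f2, OF uc2]) blast+
  have rp2: "range p2 = range (\<lambda>k. shiftk k d) \<times> range (\<lambda>k. shiftk k d)"
    by (auto simp: p2_def image_iff)
  have cp2: "closure (range p2) = H \<times> H" by (simp add: rp2 closure_Times Hcl)
  have rf2: "range f2 \<subseteq> range (\<lambda>k. shiftk k d)" by (auto simp: f2_def)
  have g2H: "g2 (x, y) \<in> H" if "x \<in> H" "y \<in> H" for x y
  proof -
    have "g2 (x, y) \<in> closure (range f2)" using g2i that cp2 by auto
    also have "\<dots> \<subseteq> H" using closure_mono[OF rf2] Hcl by simp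
    finally show ?thesis .
  qed
  have g2c': "continuous_on (H \<times> H) g2" using g2c cp2 by simp
  have g2s: "g2 (shiftk k d, shiftk l d) = shiftk (k + l) d" for k l
    using g2p[of "(k, l)"] by (simp add: p2_def f2_def)
  define p1 where "p1 = (\<lambda>k::int. shiftk k d)"
  define f1 where "f1 = (\<lambda>k::int. shiftk (- k) d)"
  have uc1: "\<exists>\<delta>>0. \<forall>i j. dist (p1 i) (p1 j) < \<delta> \<longrightarrow> dist (f1 i) (f1 j) < e" if epos: "e > 0" for e
  proof (intro exI conjI allI impI)
    show "e > 0" by (rule epos)
    fix i j assume a: "dist (p1 i) (p1 j) < e"
    have "dist (f1 i) (f1 j) = dist (shiftk (- i - - j) d) d" by (simp only: f1_def dist_orb)
    also have "\<dots> = dist (shiftk (- (i - j)) d) d" by simp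
    also have "\<dots> = dist (shiftk (i - j) d) d" by (rule dist_orb_neg)
    also have "\<dots> = dist (p1 i) (p1 j)" by (simp only: p1_def dist_orb)
    finally have "dist (f1 i) (f1 j) = dist (p1 i) (p1 j)" .
    then show "dist (f1 i) (f1 j) < e" using a by simp
  qed
  obtain g1 where g1c: "continuous_on (closure (range p1)) g1" and g1p: "\<And>i. g1 (p1 i) = f1 i"
    and g1i: "g1 ` closure (range p1) \<subseteq> closure (range f1)"
    by (rule ext_gen[of p1 f1, OF uc1]) blast+
  have cp1: "closure (range p1) = H" by (simp add: Hcl p1_def)
  have rf1: "range f1 \<subseteq> range (\<lambda>k. shiftk k d)" by (auto simp: f1_def)
  have g1H: "g1 x \<in> H" if "x \<in> H" for x
  proof -
    have "g1 x \<in> closure (range f1)" using g1i that cp1 by auto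
    also have "\<dots> \<subseteq> H" using closure_mono[OF rf1] Hcl by simp
    finally show ?thesis .
  qed
  have g1c': "continuous_on H g1" using g1c cp1 by simp
  have g1s: "g1 (shiftk k d) = shiftk (- k) d" for k using g1p[of k] by (simp add: p1_def f1_def)
  define m where "m x y = g2 (x, y)" for x y
  have cm: "continuous_on T (\<lambda>t. m (a t) (b t))"
    if "continuous_on T a" "continuous_on T b" "\<And>t. t \<in> T \<Longrightarrow> a t \<in> H" "\<And>t. t \<in> T \<Longrightarrow> b t \<in> H"
    for T and a b :: "'z::topological_space \<Rightarrow> pot"
    unfolding m_def by (rule cont2[OF g2c' that])
  have ms: "m (shiftk k d) (shiftk l d) = shiftk (k + l) d" for k l by (simp add: m_def g2s)
  have mH: "m x y \<in> H" if "x \<in> H" "y \<in> H" for x y using g2H that by (simp add: m_def)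
  let ?O = "range (\<lambda>k. shiftk k d)"
  have assoc: "m (m x y) z = m x (m y z)" if xyz: "x \<in> H" "y \<in> H" "z \<in> H" for x y z
  proof -
    let ?F1 = "\<lambda>t::pot \<times> pot \<times> pot. m (m (fst t) (fst (snd t))) (snd (snd t))"
    let ?F2 = "\<lambda>t::pot \<times> pot \<times> pot. m (fst t) (m (fst (snd t)) (snd (snd t)))"
    have cl3: "closure (?O \<times> ?O \<times> ?O) = H \<times> H \<times> H" by (simp add: closure_Times Hcl)
    have c1: "continuous_on (H \<times> H \<times> H) (\<lambda>t. fst t)" by (intro continuous_intros)
    have c2: "continuous_on (H \<times> H \<times> H) (\<lambda>t. fst (snd t))" by (intro continuous_intros)
    have c3: "continuous_on (H \<times> H \<times> H) (\<lambda>t. snd (snd t))" by (intro continuous_intros)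
    have cF1: "continuous_on (H \<times> H \<times> H) ?F1"
      by (rule cm[OF cm[OF c1 c2] c3]) (auto intro: mH)
    have cF2: "continuous_on (H \<times> H \<times> H) ?F2"
      by (rule cm[OF c1 cm[OF c2 c3]]) (auto intro: mH)
    have "?F1 t = ?F2 t" if "t \<in> ?O \<times> ?O \<times> ?O" for t
      using that by (auto simp: ms add.assoc)
    then have "?F1 (x, y, z) = ?F2 (x, y, z)"
      using eq_on_closure[of "?O \<times> ?O \<times> ?O" ?F1 ?F2 "(x, y, z)"] cF1 cF2 cl3 xyz by simp
    then show ?thesis by simp
  qed
  have idl: "m d x = x" if "x \<in> H" for x
  proof -
    have c: "continuous_on H (\<lambda>x. m d x)"
      by (rule cm[OF continuous_on_const continuous_on_id]) (auto intro: dH)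
    have "m d y = id y" if "y \<in> ?O" for y using that ms[of 0] by auto
    then show ?thesis using eq_on_closure[of ?O "\<lambda>x. m d x" id x] c continuous_on_id that Hcl by simp
  qed
  have idr: "m x d = x" if "x \<in> H" for x
  proof -
    have c: "continuous_on H (\<lambda>x. m x d)"
      by (rule cm[OF continuous_on_id continuous_on_const]) (auto intro: dH)
    have "m y d = id y" if "y \<in> ?O" for y using that ms[of _ 0] by auto
    then show ?thesis using eq_on_closure[of ?O "\<lambda>x. m x d" id x] c continuous_on_id that Hcl by simp
  qed
  have invr: "m x (g1 x) = d" if "x \<in> H" for x
  proof -
    have c: "continuous_on H (\<lambda>x. m x (g1 x))"
      by (rule cm[OF continuous_on_id g1c']) (auto intro: g1H)
    have "m y (g1 y) = d" if "y \<in> ?O" for y using that by (auto simp: g1s ms)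
    then show ?thesis using eq_on_closure[of ?O "\<lambda>x. m x (g1 x)" "\<lambda>_. d" x] c continuous_on_const that Hcl by simp
  qed
  have invl: "m (g1 x) x = d" if "x \<in> H" for x
  proof -
    have c: "continuous_on H (\<lambda>x. m (g1 x) x)"
      by (rule cm[OF g1c' continuous_on_id]) (auto intro: g1H)
    have "m (g1 y) y = d" if "y \<in> ?O" for y using that by (auto simp: g1s ms)
    then show ?thesis using eq_on_closure[of ?O "\<lambda>x. m (g1 x) x" "\<lambda>_. d" x] c continuous_on_const that Hcl by simp
  qed
  have cmm: "continuous_on (H \<times> H) (\<lambda>(x, y). m x y)"
    unfolding m_def case_prod_eta by (rule g2c')
  have "hull_group_op d m"
    unfolding hull_group_op_def H_def[symmetric]
  proof (intro conjI ballI allI)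
    show "\<exists>inv. (\<forall>x\<in>H. inv x \<in> H \<and> m x (inv x) = d \<and> m (inv x) x = d) \<and> continuous_on H inv"
      using g1H invr invl g1c' by blast
  qed (auto simp: mH assoc idl idr cmm ms)
  then show ?thesis by blast
qed

lemma hull_mult_op: "hull_group_op d (hull_mult d)"
  unfolding hull_mult_def using hull_group_op_exists by (rule someI_ex)



lemma cis_ne_1:
  fixes r N :: nat
  assumes "0 < r" "r < N"
  shows "cis (2 * pi * real r / real N) \<noteq> 1"
proof
  assume "cis (2 * pi * real r / real N) = 1"
  then have "cos (2 * pi * real r / real N) = 1"
    by (metis Re_complex_of_real cis.sel(1) of_real_1)
  then obtain n :: int where n: "2 * pi * real r / real N = real_of_int n * 2 * pi"
    using cos_one_2pi_int by blast
  have "(2 * pi) * (real r / real N) = (2 * pi) * real_of_int n" using n by (simp add: algebra_simps)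
  then have "real r / real N = real_of_int n"
    by (rule mult_left_cancel[THEN iffD1, rotated]) (use pi_gt_zero in simp)
  moreover have "0 < real r / real N" "real r / real N < 1" using assms by auto
  ultimately have "0 < n" "n < 1" by simp_all
  then show False by simp
qed

lemma cis_period:
  fixes N :: nat and k :: int
  assumes "N > 0"
  shows "cis (2 * pi * real_of_int k / real N) = cis (2 * pi * real_of_int (k mod int N) / real N)"
proof -
  have k: "real_of_int k = real N * real_of_int (k div int N) + real_of_int (k mod int N)"
    by (metis of_int_add of_int_mult of_int_of_nat_eq div_mult_mod_eq mult.commute)
  have "2 * pi * real_of_int k / real N = 2 * pi * real_of_int (k div int N) + 2 * pi * real_of_int (k mod int N) / real N"
    using assms by (simp add: k field_simps)
  then have "cis (2 * pi * real_of_int k / real N) = cis (2 * pi * real_of_int (k div int N) + 2 * pi * real_of_int (k mod int N) / real N)"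
    by (rule arg_cong[where f=cis])
  also have "\<dots> = cis (2 * pi * real_of_int (k div int N)) * cis (2 * pi * real_of_int (k mod int N) / real N)"
    by (rule cis_mult[symmetric])
  also have "cis (2 * pi * real_of_int (k div int N)) = 1" by (rule cis_multiple_2pi) simp
  finally show ?thesis by simp
qed

lemma char_period:
  fixes N :: nat
  assumes fr: "2 * pi / real N \<in> freq_module d" and N: "N > 0"
  shows "\<exists>\<delta>>0. \<forall>k. dist (shiftk k d) d < \<delta> \<longrightarrow> int N dvd k"
proof (cases "N = 1")
  case True then show ?thesis by (intro exI[where x=1]) simp
next
  case False
  then have N2: "N \<ge> 2" using N by simp
  from fr obtain chr :: "pot \<Rightarrow> complex" where cc: "continuous_on (pot_hull d) chr"
    and cs: "\<And>k::int. chr (shiftk k d) = cis (of_int k * (2 * pi / real N))"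
    unfolding freq_module_def by blast
  have cs': "chr (shiftk k d) = cis (2 * pi * real_of_int k / real N)" for k
    using cs[of k] by (simp add: field_simps)
  have chr_d: "chr d = 1" using cs'[of 0] by simp
  define c where "c = Min ((\<lambda>r. norm (cis (2 * pi * real r / real N) - 1)) ` {1..<N})"
  have fin: "finite ((\<lambda>r. norm (cis (2 * pi * real r / real N) - 1)) ` {1..<N})" by simp
  have ne: "(\<lambda>r. norm (cis (2 * pi * real r / real N) - 1)) ` {1..<N} \<noteq> {}" using N2 by auto
  have cpos: "c > 0"
    unfolding c_def using fin ne
  proof (subst Min_gr_iff)
    show "\<forall>a\<in>(\<lambda>r. norm (cis (2 * pi * real r / real N) - 1)) ` {1..<N}. 0 < a"
      using cis_ne_1 by auto
  qed auto
  have cle: "c \<le> norm (cis (2 * pi * real r / real N) - 1)" if "r \<in> {1..<N}" for r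
    unfolding c_def using fin that by (intro Min_le) auto
  from cc d_in_hull[of d] cpos obtain \<delta> where "\<delta> > 0"
    and \<delta>: "\<And>x. x \<in> pot_hull d \<Longrightarrow> dist x d < \<delta> \<Longrightarrow> dist (chr x) (chr d) < c"
    unfolding continuous_on_iff by metis
  show ?thesis
  proof (intro exI[where x=\<delta>] conjI allI impI)
    show "\<delta> > 0" by fact
    fix k assume kd: "dist (shiftk k d) d < \<delta>"
    have small: "norm (chr (shiftk k d) - 1) < c"
      using \<delta>[OF orb_in_hull kd] chr_d by (simp add: dist_norm)
    show "int N dvd k"
    proof (rule ccontr)
      assume nd: "\<not> int N dvd k"
      define r where "r = nat (k mod int N)"
      have r1: "int r = k mod int N" unfolding r_def using N by simp
      have "k mod int N \<noteq> 0" using nd by (simp add: dvd_eq_mod_eq_0)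
      moreover have "k mod int N < int N" "0 \<le> k mod int N" using N by simp_all
      ultimately have rr: "r \<in> {1..<N}" using r1 by auto
      have "chr (shiftk k d) = cis (2 * pi * real r / real N)"
        using cs'[of k] cis_period[OF N, of k] r1 by (metis of_int_of_nat_eq)
      then have "c \<le> norm (chr (shiftk k d) - 1)" using cle[OF rr] by simp
      then show False using small by simp
    qed
  qed
qed



lemma int_subgroup:
  fixes G :: "int set" and q :: int
  assumes z: "0 \<in> G" and ad: "\<And>a b. a \<in> G \<Longrightarrow> b \<in> G \<Longrightarrow> a + b \<in> G"
    and ng: "\<And>a. a \<in> G \<Longrightarrow> - a \<in> G" and q: "q \<in> G" "q > 0"
  shows "\<exists>m>0. \<forall>k. k \<in> G \<longleftrightarrow> m dvd k"
proof -
  have multn: "a * int n \<in> G" if "a \<in> G" for a n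
  proof (induction n)
    case 0 then show ?case using z by simp
  next
    case (Suc n)
    have "a * int (Suc n) = a * int n + a" by (simp add: algebra_simps)
    then show ?case using ad[OF Suc that] by simp
  qed
  have mult: "a * j \<in> G" if "a \<in> G" for a j
  proof (cases "j \<ge> 0")
    case True then show ?thesis using multn[OF that, of "nat j"] by simp
  next
    case False
    have "a * j = - (a * int (nat (- j)))" using False by simp
    then show ?thesis using ng[OF multn[OF that, of "nat (- j)"]] by simp
  qed
  define P where "P = G \<inter> {1..q}"
  have finP: "finite P" unfolding P_def by simp
  have neP: "P \<noteq> {}" unfolding P_def using q by auto
  define m where "m = Min P"
  have mP: "m \<in> P" unfolding m_def using finP neP by (rule Min_in)
  then have mG: "m \<in> G" and mpos: "m > 0" unfolding P_def by auto
  have mle: "m \<le> x" if "x \<in> G" "0 < x" "x \<le> q" for x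
    unfolding m_def using finP that by (intro Min_le) (auto simp: P_def)
  have "k \<in> G \<longleftrightarrow> m dvd k" for k
  proof
    assume kG: "k \<in> G"
    have "k mod m = k + m * (- (k div m))"
      by (simp add: algebra_simps mod_div_mult_eq minus_div_mult_eq_mod[symmetric])
    then have r: "k mod m \<in> G" using ad[OF kG mult[OF mG, of "- (k div m)"]] by simp
    have "k mod m = 0"
    proof (rule ccontr)
      assume "k mod m \<noteq> 0"
      then have "0 < k mod m" using mpos by (simp add: order_le_neq_trans pos_mod_sign)
      moreover have "k mod m < m" using mpos by simp
      moreover have "m \<le> q" using mP P_def by auto
      ultimately show False using mle[OF r] by fastforce
    qed
    then show "m dvd k" by (simp add: dvd_eq_mod_eq_0)
  next
    assume "m dvd k"
    then obtain j where "k = m * j" by (auto elim: dvdE)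
    then show "k \<in> G" using mult[OF mG] by simp
  qed
  then show ?thesis using mpos by blast
qed

lemma periodic_shift:
  assumes "periodic_pot p"
  shows "\<exists>q::nat. q > 0 \<and> (\<forall>k. int q dvd k \<longrightarrow> shiftk k p = p)"
proof -
  have fin: "finite (range (\<lambda>k::int. shiftk k p))" using assms by (simp add: periodic_pot_def orb_def)
  have "\<not> inj (\<lambda>k::int. shiftk k p)"
  proof
    assume "inj (\<lambda>k::int. shiftk k p)"
    then have "finite (UNIV :: int set)" using fin finite_imageD by blast
    then show False by simp
  qed
  then obtain a b :: int where ab: "a \<noteq> b" "shiftk a p = shiftk b p" unfolding inj_def by blast
  have r: "shiftk (a - b) p = p"
  proof -
    have "shiftk (a - b) p = shiftk (- b) (shiftk a p)" by simp
    also have "\<dots> = shiftk (- b) (shiftk b p)" using ab by simp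
    finally show ?thesis by simp
  qed
  define q where "q = nat \<bar>a - b\<bar>"
  have qpos: "q > 0" using ab by (simp add: q_def)
  have rq: "shiftk (int q) p = p"
  proof (cases "a - b \<ge> 0")
    case True then show ?thesis using r by (simp add: q_def)
  next
    case False
    have "shiftk (- (a - b)) p = shiftk (- (a - b)) (shiftk (a - b) p)" using r by simp
    also have "\<dots> = p" by simp
    finally show ?thesis using False by (simp add: q_def)
  qed
  have rqn: "shiftk (int q * int n) p = p" for n
  proof (induction n)
    case 0 then show ?case by simp
  next
    case (Suc n)
    have "shiftk (int q * int (Suc n)) p = shiftk (int q) (shiftk (int q * int n) p)"
      by (simp add: algebra_simps)
    then show ?case using Suc rq by simp
  qed
  have "shiftk k p = p" if qk: "int q dvd k" for k
  proof -
    obtain j where j: "k = int q * j" using qk by (auto elim: dvdE)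
    show ?thesis
    proof (cases "j \<ge> 0")
      case True then show ?thesis using rqn[of "nat j"] j by simp
    next
      case False
      have e: "int (nat (- j)) = - j" using False by simp
      have "shiftk k p = shiftk k (shiftk (int q * int (nat (- j))) p)" by (simp only: rqn)
      also have "\<dots> = shiftk (k + int q * (- j)) p" by (simp only: shiftk_shiftk e)
      also have "\<dots> = p" using j by simp
      finally show ?thesis .
    qed
  qed
  then show ?thesis using qpos by blast
qed



lemma cis_dvd_eq:
  fixes m :: nat
  assumes "m > 0" "int m dvd (i - j)"
  shows "cis (2 * pi * real_of_int i / real m) = cis (2 * pi * real_of_int j / real m)"
proof -
  have "i mod int m = j mod int m" using assms(2) by (simp add: mod_eq_dvd_iff)
  then show ?thesis using cis_period[OF assms(1), of i] cis_period[OF assms(1), of j] by simp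
qed

lemma hull_props:
  fixes d :: pot
  defines "H \<equiv> pot_hull d" and "M \<equiv> hull_mult d"
  shows "continuous_on (H \<times> H) (\<lambda>t. M (fst t) (snd t))"
    and "\<And>x y. x \<in> H \<Longrightarrow> y \<in> H \<Longrightarrow> M x y \<in> H"
    and "\<And>k l. M (shiftk k d) (shiftk l d) = shiftk (k + l) d"
proof -
  have hg: "hull_group_op d M" unfolding M_def by (rule hull_mult_op)
  have "continuous_on (H \<times> H) (\<lambda>(x, y). M x y)" using hg unfolding hull_group_op_def H_def by blast
  moreover have "(\<lambda>(x, y). M x y) = (\<lambda>t. M (fst t) (snd t))" by (simp add: fun_eq_iff split_def)
  ultimately show "continuous_on (H \<times> H) (\<lambda>t. M (fst t) (snd t))" by simp
  show "\<And>x y. x \<in> H \<Longrightarrow> y \<in> H \<Longrightarrow> M x y \<in> H" using hg unfolding hull_group_op_def H_def by blast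
  show "\<And>k l. M (shiftk k d) (shiftk l d) = shiftk (k + l) d" using hg unfolding hull_group_op_def by blast
qed

lemma lp_char:
  assumes lp: "limit_periodic d" and e: "e > 0"
  shows "\<exists>m::nat. m > 0 \<and> 2 * pi / real m \<in> freq_module d \<and> (\<forall>k. int m dvd k \<longrightarrow> dist (shiftk k d) d \<le> e)"
proof -
  have "e / 3 > 0" using e by simp
  then have "\<exists>y\<in>{p. periodic_pot p}. dist y d < e / 3"
    using lp unfolding limit_periodic_def closure_approachable by blast
  then obtain p where pp: "periodic_pot p" and dp: "dist p d < e / 3" by blast
  obtain q :: nat where qpos: "q > 0" and qp: "\<And>k. int q dvd k \<Longrightarrow> shiftk k p = p"
    using periodic_shift[OF pp] by blast
  have qd: "dist (shiftk k d) d < 2 * e / 3" if qk: "int q dvd k" for k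
  proof -
    have "dist (shiftk k d) d \<le> dist (shiftk k d) (shiftk k p) + dist (shiftk k p) d"
      by (rule dist_triangle)
    also have "dist (shiftk k d) (shiftk k p) = dist p d" by (simp add: dist_commute)
    also have "shiftk k p = p" by (rule qp[OF qk])
    finally show ?thesis using dp by simp
  qed
  define G where "G = {k. \<forall>\<eta>>0. \<exists>k'. int q dvd (k' - k) \<and> dist (shiftk k' d) d < \<eta>}"
  have Gcong: "k1 \<in> G" if hyp: "k2 \<in> G" "int q dvd (k1 - k2)" for k1 k2
    unfolding G_def
  proof (intro CollectI allI impI)
    fix \<eta> :: real assume "\<eta> > 0"
    then obtain k' where "int q dvd (k' - k2)" "dist (shiftk k' d) d < \<eta>" using hyp(1) unfolding G_def by blast
    moreover have "k' - k1 = (k' - k2) - (k1 - k2)" by simp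
    ultimately show "\<exists>k'. int q dvd (k' - k1) \<and> dist (shiftk k' d) d < \<eta>"
      using hyp(2) by (metis dvd_diff)
  qed
  have G0: "0 \<in> G" unfolding G_def by (auto intro: exI[where x=0])
  have Gq: "int q \<in> G" unfolding G_def by (auto intro: exI[where x=0])
  have Gadd: "a + b \<in> G" if hyp: "a \<in> G" "b \<in> G" for a b
    unfolding G_def
  proof (intro CollectI allI impI)
    fix \<eta> :: real assume "\<eta> > 0"
    then have "\<eta> / 2 > 0" by simp
    obtain k' where k': "int q dvd (k' - a)" "dist (shiftk k' d) d < \<eta> / 2"
      using hyp(1) \<open>\<eta> / 2 > 0\<close> unfolding G_def by blast
    obtain l' where l': "int q dvd (l' - b)" "dist (shiftk l' d) d < \<eta> / 2"
      using hyp(2) \<open>\<eta> / 2 > 0\<close> unfolding G_def by blast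
    have "int q dvd ((k' - a) + (l' - b))" using k'(1) l'(1) by (rule dvd_add)
    then have "int q dvd ((k' + l') - (a + b))" by (simp add: algebra_simps)
    moreover have "dist (shiftk (k' + l') d) d < \<eta>"
      using dist_orb_add[of k' l' d] k'(2) l'(2) by linarith
    ultimately show "\<exists>k'. int q dvd (k' - (a + b)) \<and> dist (shiftk k' d) d < \<eta>" by blast
  qed
  have Gneg: "- a \<in> G" if hyp: "a \<in> G" for a
    unfolding G_def
  proof (intro CollectI allI impI)
    fix \<eta> :: real assume "\<eta> > 0"
    obtain k' where k': "int q dvd (k' - a)" "dist (shiftk k' d) d < \<eta>"
      using hyp \<open>\<eta> > 0\<close> unfolding G_def by blast
    have "int q dvd (- k' - - a)" using k'(1) by (metis dvd_minus_iff minus_diff_eq diff_minus_eq_add add.commute uminus_add_conv_diff)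
    moreover have "dist (shiftk (- k') d) d < \<eta>" using k'(2) dist_orb_neg[of k' d] by simp
    ultimately show "\<exists>k'. int q dvd (k' - - a) \<and> dist (shiftk k' d) d < \<eta>" by blast
  qed
  have Gsmall: "dist (shiftk k d) d \<le> e" if kG: "k \<in> G" for k
  proof -
    have "e / 3 > 0" using e by simp
    then obtain k' where k': "int q dvd (k' - k)" "dist (shiftk k' d) d < e / 3"
      using kG unfolding G_def by blast
    have "int q dvd (k - k')" using k'(1) by (metis dvd_minus_iff minus_diff_eq)
    then have "dist (shiftk (k - k') d) d < 2 * e / 3" by (rule qd)
    then have "dist (shiftk k d) (shiftk k' d) < 2 * e / 3" by (simp add: dist_orb[of k])
    moreover have "dist (shiftk k d) d \<le> dist (shiftk k d) (shiftk k' d) + dist (shiftk k' d) d"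
      by (rule dist_triangle)
    ultimately show ?thesis using k'(2) by linarith
  qed
  have Gopen: "\<exists>\<delta>0>0. \<forall>k. dist (shiftk k d) d < \<delta>0 \<longrightarrow> k \<in> G"
  proof -
    have "\<forall>r\<in>{0..<int q} - G. \<exists>\<eta>. \<eta> > 0 \<and> (\<forall>k'. int q dvd (k' - r) \<longrightarrow> \<eta> \<le> dist (shiftk k' d) d)"
      by (auto simp: G_def not_less)
    then obtain \<eta> where \<eta>: "\<And>r. r \<in> {0..<int q} - G \<Longrightarrow> \<eta> r > 0 \<and> (\<forall>k'. int q dvd (k' - r) \<longrightarrow> \<eta> r \<le> dist (shiftk k' d) d)"
      by (metis bchoice)
    define \<delta>0 where "\<delta>0 = Min (insert 1 (\<eta> ` ({0..<int q} - G)))"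
    have fin: "finite (insert 1 (\<eta> ` ({0..<int q} - G)))" by simp
    have d0pos: "\<delta>0 > 0" unfolding \<delta>0_def using fin
      by (subst Min_gr_iff) (use \<eta> in auto)
    have d0le: "\<delta>0 \<le> \<eta> r" if "r \<in> {0..<int q} - G" for r
      unfolding \<delta>0_def using fin that by (intro Min_le) auto
    have "k \<in> G" if kd: "dist (shiftk k d) d < \<delta>0" for k
    proof (rule ccontr)
      assume kG: "k \<notin> G"
      define r where "r = k mod int q"
      have dv: "int q dvd (k - r)" unfolding r_def by (simp add: mod_eq_dvd_iff[symmetric])
      have "r \<notin> G"
      proof
        assume "r \<in> G"
        then have "k \<in> G" using Gcong dv by blast
        then show False using kG by simp
      qed
      moreover have "r \<in> {0..<int q}" unfolding r_def using qpos by simp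
      ultimately have rr: "r \<in> {0..<int q} - G" by simp
      have "\<eta> r \<le> dist (shiftk k d) d" using \<eta>[OF rr] dv by blast
      then show False using d0le[OF rr] kd by linarith
    qed
    then show ?thesis using d0pos by blast
  qed
  then obtain \<delta>0 where d0pos: "\<delta>0 > 0" and d0: "\<And>k. dist (shiftk k d) d < \<delta>0 \<Longrightarrow> k \<in> G" by blast
  obtain m0 where m0pos: "m0 > 0" and m0: "\<And>k. k \<in> G \<longleftrightarrow> m0 dvd k"
    using int_subgroup[of G "int q", OF G0 Gadd Gneg Gq] qpos by auto
  define m where "m = nat m0"
  have mpos: "m > 0" and mm: "int m = m0" using m0pos by (simp_all add: m_def)
  define p1 where "p1 = (\<lambda>k::int. shiftk k d)"
  define f1 where "f1 = (\<lambda>k::int. cis (2 * pi * real_of_int k / real m))"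
  have uc: "\<exists>\<delta>>0. \<forall>i j. dist (p1 i) (p1 j) < \<delta> \<longrightarrow> dist (f1 i) (f1 j) < \<epsilon>" if epos: "\<epsilon> > 0" for \<epsilon>
  proof (intro exI[where x=\<delta>0] conjI allI impI)
    show "\<delta>0 > 0" by (rule d0pos)
    fix i j assume "dist (p1 i) (p1 j) < \<delta>0"
    then have "dist (shiftk (i - j) d) d < \<delta>0" by (simp add: p1_def dist_orb[of i])
    then have "i - j \<in> G" by (rule d0)
    then have "int m dvd (i - j)" using m0 mm by simp
    then have "f1 i = f1 j" unfolding f1_def by (rule cis_dvd_eq[OF mpos])
    then show "dist (f1 i) (f1 j) < \<epsilon>" using epos by simp
  qed
  obtain chr where chrc: "continuous_on (closure (range p1)) chr" and chrp: "\<And>i. chr (p1 i) = f1 i"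
    by (rule ext_gen[of p1 f1, OF uc]) blast+
  have Hp: "closure (range p1) = pot_hull d" by (simp add: p1_def pot_hull_def orb_def)
  have chrc': "continuous_on (pot_hull d) chr" using chrc Hp by simp
  have chrs: "chr (shiftk k d) = cis (2 * pi * real_of_int k / real m)" for k
    using chrp[of k] by (simp add: p1_def f1_def)
  have nrm: "norm (chr x) = 1" if "x \<in> pot_hull d" for x
  proof -
    have c: "continuous_on (closure (range p1)) (\<lambda>x. norm (chr x))" using chrc by (intro continuous_intros)
    have o: "norm (chr y) = 1" if yin: "y \<in> range p1" for y
    proof -
      obtain k where "y = shiftk k d" using yin by (auto simp: p1_def)
      then show ?thesis by (simp add: chrs)
    qed
    show ?thesis
      using eq_on_closure[of "range p1" "\<lambda>x. norm (chr x)" "\<lambda>_. 1" x, OF c continuous_on_const o] that Hp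
      by simp
  qed
  have mul: "chr (hull_mult d x y) = chr x * chr y" if xy: "x \<in> pot_hull d" "y \<in> pot_hull d" for x y
  proof -
    let ?H = "pot_hull d"
    let ?F1 = "\<lambda>t. chr (hull_mult d (fst t) (snd t))"
    let ?F2 = "\<lambda>t. chr (fst t) * chr (snd t)"
    have cl: "closure (range p1 \<times> range p1) = ?H \<times> ?H" by (simp add: closure_Times Hp)
    have c1: "continuous_on (?H \<times> ?H) ?F1"
      by (rule continuous_on_compose2[OF chrc' hull_props(1)]) (auto intro: hull_props(2))
    have cf: "continuous_on (?H \<times> ?H) (\<lambda>t. chr (fst t))"
      by (rule continuous_on_compose2[OF chrc' continuous_on_fst[OF continuous_on_id]]) auto
    have cs: "continuous_on (?H \<times> ?H) (\<lambda>t. chr (snd t))"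
      by (rule continuous_on_compose2[OF chrc' continuous_on_snd[OF continuous_on_id]]) auto
    have c2: "continuous_on (?H \<times> ?H) ?F2" using cf cs by (rule continuous_on_mult)
    have "?F1 t = ?F2 t" if tin: "t \<in> range p1 \<times> range p1" for t
    proof -
      obtain k l where t: "t = (shiftk k d, shiftk l d)" using tin by (auto simp: p1_def)
      have "?F1 t = cis (2 * pi * real_of_int (k + l) / real m)" by (simp add: t hull_props(3) chrs)
      also have "\<dots> = cis (2 * pi * real_of_int k / real m) * cis (2 * pi * real_of_int l / real m)"
        by (simp add: cis_mult add_divide_distrib algebra_simps)
      finally show ?thesis by (simp add: t chrs)
    qed
    then have "?F1 (x, y) = ?F2 (x, y)"
      using eq_on_closure[of "range p1 \<times> range p1" ?F1 ?F2 "(x, y)"] c1 c2 cl xy by simp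
    then show ?thesis by simp
  qed
  have "2 * pi / real m \<in> freq_module d"
    unfolding freq_module_def
  proof (intro CollectI exI[where x=chr] conjI ballI allI)
    show "continuous_on (pot_hull d) chr" by (rule chrc')
    show "norm (chr x) = 1" if "x \<in> pot_hull d" for x using nrm that .
    show "chr (hull_mult d x y) = chr x * chr y" if "x \<in> pot_hull d" "y \<in> pot_hull d" for x y
      using mul that .
    show "chr (shiftk k d) = cis (of_int k * (2 * pi / real m))" for k
      by (simp add: chrs field_simps)
  qed
  moreover have "\<forall>k. int m dvd k \<longrightarrow> dist (shiftk k d) d \<le> e"
    using Gsmall m0 mm by simp
  ultimately show ?thesis using mpos by blast
qed



lemma chain_dvd:
  fixes n :: "nat \<Rightarrow> nat"
  assumes ch: "\<forall>j. 0 < n j \<and> n j dvd n (Suc j)" and ij: "i \<le> j"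
  shows "n i dvd n j"
  using ij
proof (induction j rule: dec_induct)
  case base then show ?case by simp
next
  case (step j) then show ?case using ch dvd_trans by blast
qed

lemma span_mem: "a \<in> A \<Longrightarrow> a \<in> int_span A"
  unfolding int_span_def by (intro CollectI exI[where x="{a}"] exI[where x="\<lambda>_. 1"]) simp

lemma span_dvd:
  fixes n :: "nat \<Rightarrow> nat" and m :: nat
  assumes ch: "\<forall>j. 0 < n j \<and> n j dvd n (Suc j)" and mpos: "m > 0"
    and sp: "2 * pi / real m \<in> int_span ((\<lambda>n. 2 * pi / real n) ` range n)"
  shows "\<exists>j. m dvd n j"
proof -
  obtain F c where finF: "finite F" and FS: "F \<subseteq> (\<lambda>n. 2 * pi / real n) ` range n"
    and sum: "2 * pi / real m = (\<Sum>a\<in>F. of_int (c a) * a)"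
    using sp unfolding int_span_def by blast
  have "\<forall>a\<in>F. \<exists>i. a = 2 * pi / real (n i)" using FS by auto
  then obtain idx where idx: "\<And>a. a \<in> F \<Longrightarrow> a = 2 * pi / real (n (idx a))" by metis
  define J where "J = Max (insert 0 (idx ` F))"
  have iJ: "idx a \<le> J" if "a \<in> F" for a unfolding J_def using finF that by (intro Max_ge) auto
  define N where "N = n J"
  have Npos: "N > 0" using ch by (simp add: N_def)
  have "\<exists>t::int. a * real N = 2 * pi * of_int t" if aF: "a \<in> F" for a
  proof -
    have "n (idx a) dvd N" unfolding N_def by (rule chain_dvd[OF ch iJ[OF aF]])
    then obtain u where u: "N = n (idx a) * u" by (auto elim: dvdE)
    have "n (idx a) > 0" using ch by simp
    then have "a * real N = 2 * pi * of_int (int u)" using idx[OF aF] u by (simp add: field_simps)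
    then show ?thesis by blast
  qed
  then obtain t where t: "\<And>a. a \<in> F \<Longrightarrow> a * real N = 2 * pi * of_int (t a)" by metis
  define C where "C = (\<Sum>a\<in>F. c a * t a)"
  have "2 * pi / real m * real N = (\<Sum>a\<in>F. of_int (c a) * a * real N)"
    by (simp add: sum sum_distrib_right)
  also have "\<dots> = (\<Sum>a\<in>F. 2 * pi * (of_int (c a) * of_int (t a)))"
    by (rule sum.cong) (simp_all add: mult.assoc t)
  also have "\<dots> = 2 * pi * of_int C" by (simp add: C_def sum_distrib_left)
  finally have "2 * pi * (real N / real m) = 2 * pi * of_int C" by simp
  then have "real N / real m = of_int C"
    by (rule mult_left_cancel[THEN iffD1, rotated]) (use pi_gt_zero in simp)
  then have "real N = real m * of_int C" using mpos by (simp add: field_simps)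
  then have "int N = int m * C" by (metis of_int_eq_iff of_int_mult of_int_of_nat_eq)
  then have "int m dvd int N" by simp
  then show ?thesis unfolding N_def by auto
qed

lemma iso_from_control:
  fixes d e :: pot
  assumes c1: "\<And>\<epsilon>. \<epsilon> > 0 \<Longrightarrow> \<exists>\<delta>>0. \<forall>k. dist (shiftk k d) d < \<delta> \<longrightarrow> dist (shiftk k e) e < \<epsilon>"
    and c2: "\<And>\<epsilon>. \<epsilon> > 0 \<Longrightarrow> \<exists>\<delta>>0. \<forall>k. dist (shiftk k e) e < \<delta> \<longrightarrow> dist (shiftk k d) d < \<epsilon>"
  shows "hulls_isomorphic d e"
proof -
  define Hd where "Hd = pot_hull d"
  define He where "He = pot_hull e"
  define pd where "pd = (\<lambda>k::int. shiftk k d)"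
  define pe where "pe = (\<lambda>k::int. shiftk k e)"
  have Hd: "closure (range pd) = Hd" by (simp add: Hd_def pd_def pot_hull_def orb_def)
  have He: "closure (range pe) = He" by (simp add: He_def pe_def pot_hull_def orb_def)
  have u1: "\<exists>\<delta>>0. \<forall>i j. dist (pd i) (pd j) < \<delta> \<longrightarrow> dist (pe i) (pe j) < \<epsilon>" if ep: "\<epsilon> > 0" for \<epsilon>
  proof -
    obtain \<delta> where "\<delta> > 0" and \<delta>: "\<forall>k. dist (shiftk k d) d < \<delta> \<longrightarrow> dist (shiftk k e) e < \<epsilon>"
      using c1[OF ep] by blast
    moreover have "\<forall>i j. dist (pd i) (pd j) < \<delta> \<longrightarrow> dist (pe i) (pe j) < \<epsilon>"
      using \<delta> by (simp add: pd_def pe_def dist_orb[where d=d] dist_orb[where d=e])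
    ultimately show ?thesis by blast
  qed
  have u2: "\<exists>\<delta>>0. \<forall>i j. dist (pe i) (pe j) < \<delta> \<longrightarrow> dist (pd i) (pd j) < \<epsilon>" if ep: "\<epsilon> > 0" for \<epsilon>
  proof -
    obtain \<delta> where "\<delta> > 0" and \<delta>: "\<forall>k. dist (shiftk k e) e < \<delta> \<longrightarrow> dist (shiftk k d) d < \<epsilon>"
      using c2[OF ep] by blast
    moreover have "\<forall>i j. dist (pe i) (pe j) < \<delta> \<longrightarrow> dist (pd i) (pd j) < \<epsilon>"
      using \<delta> by (simp add: pd_def pe_def dist_orb[where d=d] dist_orb[where d=e])
    ultimately show ?thesis by blast
  qed
  obtain \<phi> where \<phi>c: "continuous_on (closure (range pd)) \<phi>" and \<phi>p: "\<And>i. \<phi> (pd i) = pe i"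
    and \<phi>i: "\<phi> ` closure (range pd) \<subseteq> closure (range pe)"
    by (rule ext_gen[of pd pe, OF u1]) blast+
  obtain \<psi> where \<psi>c: "continuous_on (closure (range pe)) \<psi>" and \<psi>p: "\<And>i. \<psi> (pe i) = pd i"
    and \<psi>i: "\<psi> ` closure (range pe) \<subseteq> closure (range pd)"
    by (rule ext_gen[of pe pd, OF u2]) blast+
  have \<phi>c': "continuous_on Hd \<phi>" and \<phi>i': "\<phi> ` Hd \<subseteq> He" using \<phi>c \<phi>i Hd He by simp_all
  have \<psi>c': "continuous_on He \<psi>" and \<psi>i': "\<psi> ` He \<subseteq> Hd" using \<psi>c \<psi>i Hd He by simp_all
  have inv1: "\<psi> (\<phi> x) = x" if xH: "x \<in> Hd" for x
  proof -
    have c: "continuous_on (closure (range pd)) (\<lambda>x. \<psi> (\<phi> x))"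
      using continuous_on_compose2[OF \<psi>c' \<phi>c' \<phi>i'] Hd by simp
    have o: "\<psi> (\<phi> y) = y" if "y \<in> range pd" for y using that by (auto simp: \<phi>p \<psi>p)
    show ?thesis using eq_on_closure[of "range pd" "\<lambda>x. \<psi> (\<phi> x)" "\<lambda>x. x" x, OF c continuous_on_id o] xH Hd by simp
  qed
  have inv2: "\<phi> (\<psi> y) = y" if yH: "y \<in> He" for y
  proof -
    have c: "continuous_on (closure (range pe)) (\<lambda>x. \<phi> (\<psi> x))"
      using continuous_on_compose2[OF \<phi>c' \<psi>c' \<psi>i'] He by simp
    have o: "\<phi> (\<psi> y) = y" if "y \<in> range pe" for y using that by (auto simp: \<phi>p \<psi>p)
    show ?thesis using eq_on_closure[of "range pe" "\<lambda>x. \<phi> (\<psi> x)" "\<lambda>x. x" y, OF c continuous_on_id o] yH He by simp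
  qed
  have hom: "homeomorphism Hd He \<phi> \<psi>"
    by (rule homeomorphismI[OF \<phi>c' \<psi>c' \<phi>i' \<psi>i' inv1 inv2])
  have mul: "\<phi> (hull_mult d x y) = hull_mult e (\<phi> x) (\<phi> y)" if xy: "x \<in> Hd" "y \<in> Hd" for x y
  proof -
    let ?F1 = "\<lambda>t. \<phi> (hull_mult d (fst t) (snd t))"
    let ?F2 = "\<lambda>t. hull_mult e (\<phi> (fst t)) (\<phi> (snd t))"
    have cl: "closure (range pd \<times> range pd) = Hd \<times> Hd" by (simp add: closure_Times Hd)
    have c1: "continuous_on (Hd \<times> Hd) ?F1"
      by (rule continuous_on_compose2[OF \<phi>c' hull_props(1)[of d, folded Hd_def]])
        (auto intro: hull_props(2)[of _ d, folded Hd_def])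
    have cf: "continuous_on (Hd \<times> Hd) (\<lambda>t. \<phi> (fst t))"
      by (rule continuous_on_compose2[OF \<phi>c' continuous_on_fst[OF continuous_on_id]]) auto
    have cs: "continuous_on (Hd \<times> Hd) (\<lambda>t. \<phi> (snd t))"
      by (rule continuous_on_compose2[OF \<phi>c' continuous_on_snd[OF continuous_on_id]]) auto
    have cp: "continuous_on (Hd \<times> Hd) (\<lambda>t. (\<phi> (fst t), \<phi> (snd t)))" using cf cs by (rule continuous_on_Pair)
    have c2: "continuous_on (Hd \<times> Hd) (\<lambda>t. (\<lambda>s. hull_mult e (fst s) (snd s)) (\<phi> (fst t), \<phi> (snd t)))"
      by (rule continuous_on_compose2[OF hull_props(1)[of e, folded He_def] cp]) (use \<phi>i' in auto)
    have o: "?F1 t = ?F2 t" if tin: "t \<in> range pd \<times> range pd" for t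
    proof -
      obtain k l where t: "t = (shiftk k d, shiftk l d)" using tin by (auto simp: pd_def)
      have pk: "\<phi> (shiftk k d) = shiftk k e" for k using \<phi>p[of k] by (simp add: pd_def pe_def)
      show ?thesis by (simp add: t hull_props(3) pk)
    qed
    have "?F1 (x, y) = ?F2 (x, y)"
      using eq_on_closure[of "range pd \<times> range pd" ?F1 ?F2 "(x, y)"] c1 c2 cl xy o by simp
    then show ?thesis by simp
  qed
  show ?thesis unfolding hulls_isomorphic_def
    using hom mul by (auto simp: Hd_def He_def)
qed



theorem theorem2p9:
  fixes d dt :: pot and S St :: "nat set"
  assumes "limit_periodic d" and "freq_integer_set d S" and "infinite S"
    and "limit_periodic dt" and "freq_integer_set dt St"
    and "St \<subseteq> S" and "infinite St"
  shows "hulls_isomorphic d dt"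
proof -
  from assms(2) obtain n where Sn: "S = range n" and chn: "\<forall>j. 0 < n j \<and> n j dvd n (Suc j)"
    and Fd: "freq_module d = int_span ((\<lambda>n. 2 * pi / real n) ` S)"
    unfolding freq_integer_set_def by blast
  from assms(5) obtain nt where Stn: "St = range nt" and cht: "\<forall>j. 0 < nt j \<and> nt j dvd nt (Suc j)"
    and Fdt: "freq_module dt = int_span ((\<lambda>n. 2 * pi / real n) ` St)"
    unfolding freq_integer_set_def by blast
  show ?thesis
  proof (rule iso_from_control)
    fix \<epsilon> :: real assume ep: "\<epsilon> > 0"
    then have ep2: "\<epsilon> / 2 > 0" by simp
    obtain m :: nat where mpos: "m > 0" and mF: "2 * pi / real m \<in> freq_module dt"
      and mc: "\<forall>k. int m dvd k \<longrightarrow> dist (shiftk k dt) dt \<le> \<epsilon> / 2"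
      using lp_char[OF assms(4) ep2] by blast
    obtain j where mj: "m dvd nt j" using span_dvd[OF cht mpos] mF Fdt Stn by auto
    define N where "N = nt j"
    have NS: "N \<in> S" using assms(6) Stn N_def by auto
    have Npos: "N > 0" using cht N_def by simp
    have "2 * pi / real N \<in> freq_module d" unfolding Fd by (rule span_mem) (use NS in simp)
    from char_period[OF this Npos] obtain \<delta> where "\<delta> > 0"
      and \<delta>: "\<forall>k. dist (shiftk k d) d < \<delta> \<longrightarrow> int N dvd k" by blast
    have "\<forall>k. dist (shiftk k d) d < \<delta> \<longrightarrow> dist (shiftk k dt) dt < \<epsilon>"
    proof (intro allI impI)
      fix k assume "dist (shiftk k d) d < \<delta>"
      then have "int N dvd k" using \<delta> by blast
      moreover have "int m dvd int N" using mj N_def by simp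
      ultimately have "int m dvd k" by (rule dvd_trans[rotated])
      then show "dist (shiftk k dt) dt < \<epsilon>" using mc ep by fastforce
    qed
    then show "\<exists>\<delta>>0. \<forall>k. dist (shiftk k d) d < \<delta> \<longrightarrow> dist (shiftk k dt) dt < \<epsilon>"
      using \<open>\<delta> > 0\<close> by blast
  next
    fix \<epsilon> :: real assume ep: "\<epsilon> > 0"
    then have ep2: "\<epsilon> / 2 > 0" by simp
    obtain m :: nat where mpos: "m > 0" and mF: "2 * pi / real m \<in> freq_module d"
      and mc: "\<forall>k. int m dvd k \<longrightarrow> dist (shiftk k d) d \<le> \<epsilon> / 2"
      using lp_char[OF assms(1) ep2] by blast
    obtain i where mi: "m dvd n i" using span_dvd[OF chn mpos] mF Fd Sn by auto
    have "\<exists>j'\<ge>i. n j' \<in> St"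
    proof (rule ccontr)
      assume "\<not> (\<exists>j'\<ge>i. n j' \<in> St)"
      then have "St \<subseteq> n ` {..<i}" using assms(6) Sn by (force simp: not_le)
      then have "finite St" using finite_subset by blast
      then show False using assms(7) by simp
    qed
    then obtain j' where ij: "i \<le> j'" and jSt: "n j' \<in> St" by blast
    define s where "s = n j'"
    have spos: "s > 0" using chn s_def by simp
    have "n i dvd s" unfolding s_def by (rule chain_dvd[OF chn ij])
    then have ms: "m dvd s" using mi dvd_trans by blast
    have "2 * pi / real s \<in> freq_module dt" unfolding Fdt by (rule span_mem) (use jSt s_def in simp)
    from char_period[OF this spos] obtain \<delta> where "\<delta> > 0"
      and \<delta>: "\<forall>k. dist (shiftk k dt) dt < \<delta> \<longrightarrow> int s dvd k" by blast
    have "\<forall>k. dist (shiftk k dt) dt < \<delta> \<longrightarrow> dist (shiftk k d) d < \<epsilon>"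
    proof (intro allI impI)
      fix k assume "dist (shiftk k dt) dt < \<delta>"
      then have "int s dvd k" using \<delta> by blast
      moreover have "int m dvd int s" using ms by simp
      ultimately have "int m dvd k" by (rule dvd_trans[rotated])
      then show "dist (shiftk k d) d < \<epsilon>" using mc ep by fastforce
    qed
    then show "\<exists>\<delta>>0. \<forall>k. dist (shiftk k dt) dt < \<delta> \<longrightarrow> dist (shiftk k d) d < \<epsilon>"
      using \<open>\<delta> > 0\<close> by blast
  qed
qed


end
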